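(* There exist a financial system $S$ in the base model (all contracts of the same priority) and distinct banks $u,v_1,v_2$ with $e_{v_1},e_{v_2}\ge 1$ such that the following holds. For $(s_1,s_2)\in\{C,D\}^2$ let $S_{s_1s_2}$ be the system obtained from $S$ by, for each $i$ with $s_i=C$, decreasing $e_{v_i}$ by $1$ and increasing $e_u$ by $1$ (bank $v_i$ donates one unit to $u$). Then each $S_{s_1s_2}$ has exactly one solution, and the payoffs $(q_{v_1},q_{v_2})$ of $v_1,v_2$ at that solution, measured relative to the original external assets (i.e. the payoff of $v_i$ in $S_{s_1s_2}$ minus $e_{v_i}$ of $S$ plus the external assets $v_i$ still holds, equivalently its net gain from contracts minus the donated amount), are $(2,2)$ for $CC$, $(0,0)$ for $DD$, $(2,3)$ for $CD$, and $(3,2)$ for $DC$. In particular, in the two-player game where $v_i$ chooses $s_i$, the pure Nash equilibria are exactly $CD$ and $DC$.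
   Context: A financial system with payment priorities consists of: a finite set $V$ of banks; external assets $e_v\ge 0$ for each $v\in V$; a number $P\ge 1$ of priority levels; and a finite set of contracts, each of which is either a debt contract from a debtor $u$ to a creditor $v\neq u$ with weight $c>0$, or a credit default swap (CDS) from a debtor $u$ to a creditor $v\neq u$ in reference to a bank $w\notin\{u,v\}$ (the reference entity) with weight $c>0$. Every contract has a priority in $\{1,\dots,P\}$ (1 is the highest priority). It is assumed that every bank that is the reference entity of some CDS is the debtor of at least one debt contract of positive weight. Given a recovery rate vector $r\in[0,1]^V$: the liability of a contract $k$ is $l_k(r)=c$ if $k$ is a debt of weight $c$, and $l_k(r)=c\,(1-r_w)$ if $k$ is a CDS of weight $c$ in reference to $w$. For a bank $v$, $l_v(r)$ is the sum of the liabilities of the contracts with debtor $v$; $l_v^{(\rho)}(r)$ is the sum of the liabilities of contracts with debtor $v$ and priority $\rho$; and $l_v^{(\le\rho)}(r)=\sum_{i=1}^{\rho}l_v^{(i)}(r)$ (with $l_v^{(\le 0)}=0$). The payment on a contract $k$ with debtor $v$ and priority $\rho$ is $p_k(r)=l_k(r)\cdot\min\{1,\max\{0,(r_v l_v(r)-l_v^{(\le\rho-1)}(r))/l_v^{(\rho)}(r)\}\}$ (and $p_k(r)=0$ if $l_v^{(\rho)}(r)=0$). The assets of $v$ are $a_v(r)=e_v+\sum_k p_k(r)$, summing over contracts $k$ with creditor $v$. A vector $r\in[0,1]^V$ is a solution (clearing vector) if for every $v\in V$: $r_v=1$ when $a_v(r)\ge l_v(r)$, and $r_v=a_v(r)/l_v(r)$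 when $a_v(r)<l_v(r)$. The payoff of $v$ is $q_v(r)=\max\{a_v(r)-l_v(r),0\}$. When $P=1$, payments reduce to $p_k(r)=r_v\,l_k(r)$ (principle of proportionality); this is called the base model. In this statement the acting banks $v_1,v_2$ have no outgoing contracts, and the game payoff of $v_i$ in $S_{s_1s_2}$ is defined as $q_{v_i}$ computed in $S_{s_1s_2}$ minus the external assets $e_{v_i}$ that $v_i$ had in $S$ plus... more simply: the total incoming payments of $v_i$ at the solution of $S_{s_1s_2}$ minus the amount ($0$ or $1$) that $v_i$ donated. *)

theory Defs
  imports Main "HOL.Real"
begin

text \<open>A contract is either a debt contract
  Debt u v c rho (debtor u, creditor v, weight c, priority rho) or a CDS
  CDS u v w c rho (debtor u, creditor v, reference entity w, weight c, priority rho).\<close>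

datatype contract =
    Debt nat nat real nat
  | CDS nat nat nat real nat

fun debtor :: "contract \<Rightarrow> nat" where
  "debtor (Debt u v c p) = u" | "debtor (CDS u v w c p) = u"

fun creditor :: "contract \<Rightarrow> nat" where
  "creditor (Debt u v c p) = v" | "creditor (CDS u v w c p) = v"

fun weight :: "contract \<Rightarrow> real" where
  "weight (Debt u v c p) = c" | "weight (CDS u v w c p) = c"

fun prio :: "contract \<Rightarrow> nat" where
  "prio (Debt u v c p) = p" | "prio (CDS u v w c p) = p"

record fsys =
  banks :: "nat set"
  ext :: "nat \<Rightarrow> real"
  nprio :: nat
  contracts :: "contract set"

definition wf_system :: "fsys \<Rightarrow> bool" where
  "wf_system S \<longleftrightarrow>
     finite (banks S) \<and> finite (contracts S) \<and> nprio S \<ge> 1 \<and>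
     (\<forall>v\<in>banks S. ext S v \<ge> 0) \<and>
     (\<forall>k\<in>contracts S. debtor k \<in> banks S \<and> creditor k \<in> banks S \<and>
        debtor k \<noteq> creditor k \<and> weight k > 0 \<and> 1 \<le> prio k \<and> prio k \<le> nprio S) \<and>
     (\<forall>u v w c p. CDS u v w c p \<in> contracts S \<longrightarrow>
        w \<in> banks S \<and> w \<noteq> u \<and> w \<noteq> v \<and>
        (\<exists>k\<in>contracts S. (\<exists>v' c' p'. k = Debt w v' c' p' \<and> c' > 0)))"

definition base_model :: "fsys \<Rightarrow> bool" where
  "base_model S \<longleftrightarrow> nprio S = 1"

fun liab :: "contract \<Rightarrow> (nat \<Rightarrow> real) \<Rightarrow> real" where
  "liab (Debt u v c p) r = c"
| "liab (CDS u v w c p) r = c * (1 - r w)"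

definition lv :: "fsys \<Rightarrow> (nat \<Rightarrow> real) \<Rightarrow> nat \<Rightarrow> real" where
  "lv S r v = (\<Sum>k\<in>{k\<in>contracts S. debtor k = v}. liab k r)"

definition lvp :: "fsys \<Rightarrow> (nat \<Rightarrow> real) \<Rightarrow> nat \<Rightarrow> nat \<Rightarrow> real" where
  "lvp S r v \<rho> = (\<Sum>k\<in>{k\<in>contracts S. debtor k = v \<and> prio k = \<rho>}. liab k r)"

definition lvle :: "fsys \<Rightarrow> (nat \<Rightarrow> real) \<Rightarrow> nat \<Rightarrow> nat \<Rightarrow> real" where
  "lvle S r v \<rho> = (\<Sum>i\<in>{1..\<rho>}. lvp S r v i)"

definition pay :: "fsys \<Rightarrow> (nat \<Rightarrow> real) \<Rightarrow> contract \<Rightarrow> real" where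
  "pay S r k =
     (let v = debtor k; \<rho> = prio k in
      if lvp S r v \<rho> = 0 then 0
      else liab k r * min 1 (max 0 ((r v * lv S r v - lvle S r v (\<rho> - 1)) / lvp S r v \<rho>)))"

definition incoming :: "fsys \<Rightarrow> (nat \<Rightarrow> real) \<Rightarrow> nat \<Rightarrow> real" where
  "incoming S r v = (\<Sum>k\<in>{k\<in>contracts S. creditor k = v}. pay S r k)"

definition assets :: "fsys \<Rightarrow> (nat \<Rightarrow> real) \<Rightarrow> nat \<Rightarrow> real" where
  "assets S r v = ext S v + incoming S r v"

definition payoff :: "fsys \<Rightarrow> (nat \<Rightarrow> real) \<Rightarrow> nat \<Rightarrow> real" where
  "payoff S r v = max (assets S r v - lv S r v) 0"

text \<open>A clearing vector r in [0,1]^V; as a function on nat it is fixed to 0 outside V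
  so that uniqueness is meaningful.\<close>
definition is_solution :: "fsys \<Rightarrow> (nat \<Rightarrow> real) \<Rightarrow> bool" where
  "is_solution S r \<longleftrightarrow>
     (\<forall>v. v \<notin> banks S \<longrightarrow> r v = 0) \<and>
     (\<forall>v\<in>banks S. 0 \<le> r v \<and> r v \<le> 1 \<and>
        (assets S r v \<ge> lv S r v \<longrightarrow> r v = 1) \<and>
        (assets S r v < lv S r v \<longrightarrow> r v = assets S r v / lv S r v))"

datatype strat = C | D

definition donated :: "strat \<Rightarrow> real" where
  "donated s = (if s = C then 1 else 0)"

definition donate :: "nat \<Rightarrow> nat \<Rightarrow> fsys \<Rightarrow> fsys" where
  "donate u v S = S\<lparr>ext := (ext S)(v := ext S v - 1, u := ext S u + 1)\<rparr>"

definition game_sys :: "fsys \<Rightarrow> nat \<Rightarrow> nat \<Rightarrow> nat \<Rightarrow> strat \<Rightarrow> strat \<Rightarrow> fsys" where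
  "game_sys S u v1 v2 s1 s2 =
     (let S1 = (if s1 = C then donate u v1 S else S) in
      if s2 = C then donate u v2 S1 else S1)"

definition game_payoff :: "fsys \<Rightarrow> nat \<Rightarrow> nat \<Rightarrow> nat \<Rightarrow> strat \<Rightarrow> strat \<Rightarrow> real \<times> real" where
  "game_payoff S u v1 v2 s1 s2 =
     (let S' = game_sys S u v1 v2 s1 s2; r = (THE r. is_solution S' r) in
      (incoming S' r v1 - donated s1, incoming S' r v2 - donated s2))"

definition pure_nash :: "(strat \<Rightarrow> strat \<Rightarrow> real \<times> real) \<Rightarrow> strat \<Rightarrow> strat \<Rightarrow> bool" where
  "pure_nash g s1 s2 \<longleftrightarrow>
     (\<forall>t. fst (g t s2) \<le> fst (g s1 s2)) \<and> (\<forall>t. snd (g s1 t) \<le> snd (g s1 s2))"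

end

theory Submission imports Defs begin

definition K :: "contract set" where
  "K = {Debt 0 6 1 1, CDS 3 4 0 1 1, Debt 4 6 1 1, CDS 5 1 4 3 1, CDS 5 2 4 3 1}"

locale tsys =
  fixes T :: fsys and e :: real
  assumes cT: "contracts T = K" and nT: "nprio T = 1" and bT: "banks T = {0..6}"
    and e0: "ext T 0 = e" and ee: "e = 0 \<or> e \<ge> 1"
    and e3: "ext T 3 = 1" and e4: "ext T 4 = 0" and e5: "ext T 5 = 6"
    and e1: "ext T 1 \<ge> 0" and e2: "ext T 2 \<ge> 0" and e6: "ext T 6 \<ge> 0"
begin

lemma lv_eq: "lv T r v = (if v = 0 then 1 else if v = 3 then 1 - r 0 else if v = 4 then 1
   else if v = 5 then 6 * (1 - r 4) else 0)"
  unfolding lv_def cT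
  by (subst sum.inter_filter) (auto simp: K_def)


lemma lvp_eq: "lvp T r v 1 = lv T r v"
  unfolding lvp_def lv_def cT
  by (rule sum.cong) (auto simp: K_def)

lemma lvle0: "lvle T r v 0 = 0"
  unfolding lvle_def by simp

lemma pay_eq: "k \<in> K \<Longrightarrow> pay T r k = (if lv T r (debtor k) = 0 then 0
   else liab k r * min 1 (max 0 (r (debtor k))))"
proof -
  assume k: "k \<in> K"
  then have p: "prio k = 1" by (auto simp: K_def)
  show ?thesis unfolding pay_def Let_def p using lvp_eq lvle0 by simp
qed

lemma inc_eq: "incoming T r v = (if v = 4 then pay T r (CDS 3 4 0 1 1)
   else if v = 1 then pay T r (CDS 5 1 4 3 1) else if v = 2 then pay T r (CDS 5 2 4 3 1)
   else if v = 6 then pay T r (Debt 0 6 1 1) + pay T r (Debt 4 6 1 1) else 0)"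
  unfolding incoming_def cT
  by (subst sum.inter_filter) (auto simp: K_def)

definition "rho = (if e \<ge> 1 then 1 else (0::real))"
definition "sol = (\<lambda>v::nat. if v \<in> {1,2,3,5,6} then 1 else if v = 0 then rho else if v = 4 then 1 - rho else 0)"

lemma rho01: "rho = 0 \<or> rho = 1" by (simp add: rho_def)

lemma sol_unique: assumes S: "is_solution T r" shows "r = sol"
proof -
  have out: "\<And>v. v > 6 \<Longrightarrow> r v = 0" using S bT unfolding is_solution_def by auto
  have h: "\<And>v. v \<le> 6 \<Longrightarrow> 0 \<le> r v \<and> r v \<le> 1 \<and>
     (ext T v + incoming T r v \<ge> lv T r v \<longrightarrow> r v = 1) \<and>
     (ext T v + incoming T r v < lv T r v \<longrightarrow> r v = (ext T v + incoming T r v) / lv T r v)"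
    using S bT unfolding is_solution_def assets_def by auto
  have r0: "r 0 = rho"
    using h[of 0] ee by (auto simp: e0 inc_eq lv_eq rho_def)
  have r3: "r 3 = 1"
    using h[of 3] h[of 0] by (auto simp: e3 inc_eq lv_eq)
  have a4: "incoming T r 4 = 1 - rho"
    using r0 r3 rho01 by (auto simp: inc_eq pay_eq K_def lv_eq)
  have r4: "r 4 = 1 - rho"
    using h[of 4] a4 rho01 by (auto simp: e4 lv_eq)
  have r5: "r 5 = 1"
    using h[of 5] h[of 4] by (auto simp: e5 inc_eq lv_eq)
  have r1: "r 1 = 1"
    using h[of 1] r4 r5 rho01 e1 by (auto simp: inc_eq lv_eq pay_eq K_def)
  have r2: "r 2 = 1"
    using h[of 2] r4 r5 rho01 e2 by (auto simp: inc_eq lv_eq pay_eq K_def)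
  have r6: "r 6 = 1"
    using h[of 6] r0 r4 rho01 e6 by (auto simp: inc_eq lv_eq pay_eq K_def)
  show ?thesis
  proof
    fix v show "r v = sol v"
    proof (cases "v > 6")
      case True thus ?thesis using out by (simp add: sol_def)
    next
      case False
      then have "v = 0 \<or> v = 1 \<or> v = 2 \<or> v = 3 \<or> v = 4 \<or> v = 5 \<or> v = 6" by linarith
      thus ?thesis using r0 r1 r2 r3 r4 r5 r6 by (auto simp: sol_def)
    qed
  qed
qed

lemma sol_is: "is_solution T sol"
proof -
  have r0: "sol 0 = rho" and r1: "sol 1 = 1" and r2: "sol 2 = 1" and r3: "sol 3 = 1"
   and r4: "sol 4 = 1 - rho" and r5: "sol 5 = 1" and r6: "sol 6 = 1"
    by (auto simp: sol_def)
  have i0: "incoming T sol 0 = 0" and i3: "incoming T sol 3 = 0" and i5: "incoming T sol 5 = 0"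
    by (simp_all add: inc_eq)
  have i4: "incoming T sol 4 = 1 - rho"
    using r0 r3 rho01 by (auto simp: inc_eq pay_eq K_def lv_eq)
  have i1: "incoming T sol 1 \<ge> 0" and i2: "incoming T sol 2 \<ge> 0"
    using r4 r5 rho01 by (auto simp: inc_eq lv_eq pay_eq K_def)
  have i6: "incoming T sol 6 \<ge> 0"
    using r0 r4 rho01 by (auto simp: inc_eq lv_eq pay_eq K_def)
  have l: "lv T sol 0 = 1" "lv T sol 1 = 0" "lv T sol 2 = 0" "lv T sol 3 = 1 - rho"
     "lv T sol 4 = 1" "lv T sol 5 = 6 * rho" "lv T sol 6 = 0"
    using r4 r0 by (simp_all add: lv_eq)
  have rng: "\<And>v. 0 \<le> sol v \<and> sol v \<le> 1" using rho01 by (auto simp: sol_def)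
  have "\<forall>v\<in>banks T. (assets T sol v \<ge> lv T sol v \<longrightarrow> sol v = 1) \<and>
        (assets T sol v < lv T sol v \<longrightarrow> sol v = assets T sol v / lv T sol v)"
  proof
    fix v assume "v \<in> banks T"
    then have "v = 0 \<or> v = 1 \<or> v = 2 \<or> v = 3 \<or> v = 4 \<or> v = 5 \<or> v = 6"
      using bT by auto
    then show "(assets T sol v \<ge> lv T sol v \<longrightarrow> sol v = 1) \<and>
        (assets T sol v < lv T sol v \<longrightarrow> sol v = assets T sol v / lv T sol v)"
    proof (elim disjE)
      assume v: "v = 0" show ?thesis unfolding v assets_def using l r0 i0 e0 ee rho_def by auto
    next
      assume v: "v = 1" show ?thesis unfolding v assets_def using l r1 i1 e1 by auto
    next
      assume v: "v = 2" show ?thesis unfolding v assets_def using l r2 i2 e2 by auto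
    next
      assume v: "v = 3" show ?thesis unfolding v assets_def using l r3 i3 e3 rho01 by auto
    next
      assume v: "v = 4" show ?thesis unfolding v assets_def using l r4 i4 e4 rho01 by auto
    next
      assume v: "v = 5" show ?thesis unfolding v assets_def using l r5 i5 e5 rho01 by auto
    next
      assume v: "v = 6" show ?thesis unfolding v assets_def using l r6 i6 e6 by auto
    qed
  qed
  moreover have "\<forall>v. v \<notin> banks T \<longrightarrow> sol v = 0" using bT by (auto simp: sol_def)
  ultimately show ?thesis unfolding is_solution_def using rng by (intro conjI ballI allI impI) (meson | blast)+
qed

lemma sol_iff: "is_solution T r \<longleftrightarrow> r = sol"
  using sol_is sol_unique by blast

lemma inc_v12: "incoming T sol 1 = 3 * rho \<and> incoming T sol 2 = 3 * rho"
proof -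
  have a: "sol 4 = 1 - rho" "sol 5 = 1" by (auto simp: sol_def)
  show ?thesis using a rho01 by (auto simp: inc_eq lv_eq pay_eq K_def)
qed

lemmas inc_v1 = inc_v12[THEN conjunct1] and inc_v2 = inc_v12[THEN conjunct2]

end

definition S0 :: fsys where
  "S0 = \<lparr>banks = {0..6}, ext = (\<lambda>v. if v = 1 \<or> v = 2 \<or> v = 3 then 1 else if v = 5 then 6 else 0),
        nprio = 1, contracts = K\<rparr>"

lemma ts: "tsys (game_sys S0 0 1 2 s1 s2) (donated s1 + donated s2)"
  by (cases s1; cases s2) (auto simp: tsys_def game_sys_def donate_def S0_def donated_def)

lemma gp: "game_payoff S0 0 1 2 s1 s2 =
  (3 * (if donated s1 + donated s2 \<ge> 1 then 1 else 0) - donated s1,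
   3 * (if donated s1 + donated s2 \<ge> 1 then 1 else 0) - donated s2)"
proof -
  interpret tsys "game_sys S0 0 1 2 s1 s2" "donated s1 + donated s2" by (rule ts)
  have "(THE r. is_solution (game_sys S0 0 1 2 s1 s2) r) = sol" using sol_iff by simp
  then show ?thesis unfolding game_payoff_def Let_def using inc_v1 inc_v2 by (simp add: rho_def)
qed

lemma uq: "\<exists>!r. is_solution (game_sys S0 0 1 2 s1 s2) r"
proof -
  interpret tsys "game_sys S0 0 1 2 s1 s2" "donated s1 + donated s2" by (rule ts)
  show ?thesis using sol_iff by auto
qed

lemma gCC: "game_payoff S0 0 1 2 C C = (2, 2)" and gDD: "game_payoff S0 0 1 2 D D = (0, 0)"
  and gCD: "game_payoff S0 0 1 2 C D = (2, 3)" and gDC: "game_payoff S0 0 1 2 D C = (3, 2)"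
  unfolding gp by (simp_all add: donated_def)

lemma all_strat: "(\<forall>t. P t) = (P C \<and> P D)" by (metis strat.exhaust)

lemma nash: "{(s1, s2). pure_nash (game_payoff S0 0 1 2) s1 s2} = {(C, D), (D, C)}"
proof -
  have "\<And>s1 s2. pure_nash (game_payoff S0 0 1 2) s1 s2 \<longleftrightarrow> (s1, s2) \<in> {(C, D), (D, C)}"
    subgoal for s1 s2 unfolding pure_nash_def all_strat gCC gDD gCD gDC by (cases s1; cases s2) (simp_all add: gCC[simplified] gDD[simplified] gCD[simplified] gDC[simplified])
    done
  then show ?thesis by auto
qed

lemma wf: "wf_system S0"
  unfolding wf_system_def S0_def by (auto simp: K_def)

theorem mainTheorem12:
  shows "\<exists>S u v1 v2.
    wf_system S \<and> base_model S \<and>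
    u \<in> banks S \<and> v1 \<in> banks S \<and> v2 \<in> banks S \<and>
    u \<noteq> v1 \<and> u \<noteq> v2 \<and> v1 \<noteq> v2 \<and>
    ext S v1 \<ge> 1 \<and> ext S v2 \<ge> 1 \<and>
    (\<forall>k\<in>contracts S. debtor k \<noteq> v1 \<and> debtor k \<noteq> v2) \<and>
    (\<forall>s1 s2. \<exists>!r. is_solution (game_sys S u v1 v2 s1 s2) r) \<and>
    game_payoff S u v1 v2 C C = (2, 2) \<and>
    game_payoff S u v1 v2 D D = (0, 0) \<and>
    game_payoff S u v1 v2 C D = (2, 3) \<and>
    game_payoff S u v1 v2 D C = (3, 2) \<and>
    {(s1, s2). pure_nash (game_payoff S u v1 v2) s1 s2} = {(C, D), (D, C)}"
proof (intro exI conjI)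
  show "wf_system S0" by (rule wf)
  show "\<forall>s1 s2. \<exists>!r. is_solution (game_sys S0 0 1 2 s1 s2) r" using uq by blast
  show "game_payoff S0 0 1 2 C C = (2, 2)" by (rule gCC)
  show "game_payoff S0 0 1 2 D D = (0, 0)" by (rule gDD)
  show "game_payoff S0 0 1 2 C D = (2, 3)" by (rule gCD)
  show "game_payoff S0 0 1 2 D C = (3, 2)" by (rule gDC)
  show "{(s1, s2). pure_nash (game_payoff S0 0 1 2) s1 s2} = {(C, D), (D, C)}" by (rule nash)
qed (auto simp: S0_def base_model_def K_def)

end
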